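(* Let $M$ be a matroid, let $\mathcal{T}$ be a tangle of $M$, let $X\subseteq E(M)$ be independent in the tangle matroid $M(\mathcal{T})$, and let $e\in X$. Then $X\setminus e$ is independent in the tangle matroid $(M\setminus e)(\mathcal{T}')$, where $\mathcal{T}'$ is the tangle of $M\setminus e$ inherited from $\mathcal{T}$.
   Context: $\lambda_M(X) = \rank_M(X) + \rank_M(E(M)\setminus X) - \rank(M)$. A tangle of order $\theta$ of $M$ is a collection $\mathcal{T}$ of subsets of $E(M)$ such that: (i) $\lambda_M(X)<\theta$ for all $X\in\mathcal{T}$; (ii) for every $X\subseteq E(M)$ with $\lambda_M(X)<\theta$, either $X\in\mathcal{T}$ or $E(M)\setminus X\in\mathcal{T}$; (iii) if $X,Y,Z\in\mathcal{T}$ then $X\cup Y\cup Z\neq E(M)$; (iv) $E(M)\setminus\{e\}\notin\mathcal{T}$ for every $e\in E(M)$. The tangle matroid $M(\mathcal{T})$ has rank function $\rank_{\mathcal{T}}(X) = \min\{\lambda_M(Y): X\subseteq Y\in\mathcal{T}\}$ if some member of $\mathcal{T}$ contains $X$, and $\theta$ otherwise. For a minor $N$ of $M$ with $S=E(M)\setminus E(N)$, the tangle of $N$ inherited from $\mathcal{T}$ is $\{X\setminus S: X\in\mathcal{T},\ \lambda_N(X\setminus S)<\theta-|S|\}$, a tangle of $N$ of order $\theta-|S|$. *)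

theory Defs
  imports Main
begin

definition matroid :: "'a set \<Rightarrow> ('a set \<Rightarrow> nat) \<Rightarrow> bool" where
  "matroid E r \<longleftrightarrow> finite E
     \<and> (\<forall>X. X \<subseteq> E \<longrightarrow> r X \<le> card X)
     \<and> (\<forall>X Y. X \<subseteq> Y \<and> Y \<subseteq> E \<longrightarrow> r X \<le> r Y)
     \<and> (\<forall>X Y. X \<subseteq> E \<and> Y \<subseteq> E \<longrightarrow> r (X \<union> Y) + r (X \<inter> Y) \<le> r X + r Y)"

text \<open>Deletion of e is represented as the pair (E - {e}, r) (rank restricted).\<close>

definition conn :: "'a set \<Rightarrow> ('a set \<Rightarrow> nat) \<Rightarrow> 'a set \<Rightarrow> nat" where
  "conn E r X = r X + r (E - X) - r E"

definition is_tangle :: "'a set \<Rightarrow> ('a set \<Rightarrow> nat) \<Rightarrow> nat \<Rightarrow> 'a set set \<Rightarrow> bool" where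
  "is_tangle E r \<theta> T \<longleftrightarrow>
     (\<forall>X\<in>T. X \<subseteq> E)
     \<and> (\<forall>X\<in>T. conn E r X < \<theta>)
     \<and> (\<forall>X. X \<subseteq> E \<and> conn E r X < \<theta> \<longrightarrow> X \<in> T \<or> E - X \<in> T)
     \<and> (\<forall>X\<in>T. \<forall>Y\<in>T. \<forall>Z\<in>T. X \<union> Y \<union> Z \<noteq> E)
     \<and> (\<forall>e\<in>E. E - {e} \<notin> T)"

definition tangle_rank :: "'a set \<Rightarrow> ('a set \<Rightarrow> nat) \<Rightarrow> nat \<Rightarrow> 'a set set \<Rightarrow> 'a set \<Rightarrow> nat" where
  "tangle_rank E r \<theta> T X =
     (if \<exists>Y\<in>T. X \<subseteq> Y then Min {conn E r Y | Y. Y \<in> T \<and> X \<subseteq> Y} else \<theta>)"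

definition tangle_indep :: "'a set \<Rightarrow> ('a set \<Rightarrow> nat) \<Rightarrow> nat \<Rightarrow> 'a set set \<Rightarrow> 'a set \<Rightarrow> bool" where
  "tangle_indep E r \<theta> T X \<longleftrightarrow> X \<subseteq> E \<and> tangle_rank E r \<theta> T X = card X"

definition inherited_tangle ::
  "'a set \<Rightarrow> nat \<Rightarrow> 'a set set \<Rightarrow> 'a set \<Rightarrow> ('a set \<Rightarrow> nat) \<Rightarrow> 'a set set" where
  "inherited_tangle E \<theta> T E' r' =
     {X - (E - E') | X. X \<in> T \<and> conn E' r' (X - (E - E')) < \<theta> - card (E - E')}"

end

theory Submission
  imports Defs
begin

lemma m_card: "matroid E r \<Longrightarrow> X \<subseteq> E \<Longrightarrow> r X \<le> card X"
  unfolding matroid_def by (elim conjE allE) (erule impE)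
lemma r_mono: "matroid E r \<Longrightarrow> X \<subseteq> Y \<Longrightarrow> Y \<subseteq> E \<Longrightarrow> r X \<le> r Y"
  unfolding matroid_def by (elim conjE allE) (erule impE, rule conjI)
lemma r_sub: "matroid E r \<Longrightarrow> X \<subseteq> E \<Longrightarrow> Y \<subseteq> E \<Longrightarrow> r (X \<union> Y) + r (X \<inter> Y) \<le> r X + r Y"
  unfolding matroid_def by (elim conjE allE) (erule impE, rule conjI)
lemma m_fin: "matroid E r \<Longrightarrow> finite E"
  unfolding matroid_def by (elim conjE)
lemma t_sub: "is_tangle E r \<theta> T \<Longrightarrow> X \<in> T \<Longrightarrow> X \<subseteq> E"
  unfolding is_tangle_def by (elim conjE) (erule ballE, assumption, erule notE)
lemma t_conn: "is_tangle E r \<theta> T \<Longrightarrow> X \<in> T \<Longrightarrow> conn E r X < \<theta>"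
  unfolding is_tangle_def by (elim conjE) (erule ballE, assumption, erule notE)
lemma t_ax: "is_tangle E r \<theta> T \<Longrightarrow> X \<subseteq> E \<Longrightarrow> conn E r X < \<theta> \<Longrightarrow> X \<in> T \<or> E - X \<in> T"
  unfolding is_tangle_def by (elim conjE allE) (erule impE, rule conjI)
lemma tangle_cover: "is_tangle E r \<theta> T \<Longrightarrow> X \<in> T \<Longrightarrow> Y \<in> T \<Longrightarrow> Z \<in> T \<Longrightarrow> X \<union> Y \<union> Z = E \<Longrightarrow> False"
  unfolding is_tangle_def by (elim conjE) (drule bspec, assumption, drule bspec, assumption, drule bspec, assumption, erule notE)
lemma t_del: "is_tangle E r \<theta> T \<Longrightarrow> f \<in> E \<Longrightarrow> E - {f} \<in> T \<Longrightarrow> False"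
  unfolding is_tangle_def by (elim conjE) (drule bspec, assumption, erule notE)

lemma r_empty: "matroid E r \<Longrightarrow> r {} = 0"
  using m_card[of E r "{}"] by simp

lemma r_single: assumes "matroid E r" "f \<in> E" shows "r {f} \<le> 1"
  using m_card[OF assms(1), of "{f}"] assms(2) by simp

lemma r_insert: assumes "matroid E r" "f \<in> E" "Y \<subseteq> E"
  shows "r (insert f Y) \<le> r Y + 1"
proof -
  have "r (Y \<union> {f}) + r (Y \<inter> {f}) \<le> r Y + r {f}" using r_sub[OF assms(1) assms(3), of "{f}"] assms(2) by auto
  hence "r (insert f Y) \<le> r Y + r {f}" by simp
  thus ?thesis using r_single[OF assms(1,2)] by linarith
qed

lemma conn_del_le:
  assumes M: "matroid E r" and e: "e \<in> E" and Y: "Y \<subseteq> E - {e}"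
  shows "conn (E - {e}) r Y \<le> conn E r Y"
proof -
  have "r ((E - Y) \<union> (E - {e})) + r ((E - Y) \<inter> (E - {e})) \<le> r (E - Y) + r (E - {e})"
    using r_sub[OF M] by auto
  moreover have "(E - Y) \<union> (E - {e}) = E" using Y e by auto
  moreover have "(E - Y) \<inter> (E - {e}) = E - {e} - Y" by auto
  ultimately have "r E + r (E - {e} - Y) \<le> r (E - Y) + r (E - {e})" by simp
  thus ?thesis unfolding conn_def by arith
qed

lemma conn_del_ge:
  assumes M: "matroid E r" and e: "e \<in> Z" and Z: "Z \<subseteq> E"
  shows "conn E r Z \<le> conn (E - {e}) r (Z - {e}) + 1"
proof -
  have "r (insert e (Z - {e})) \<le> r (Z - {e}) + 1" using r_insert[OF M, of e "Z - {e}"] e Z by auto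
  hence a: "r Z \<le> r (Z - {e}) + 1" using e by (simp add: insert_absorb)
  have b: "r (E - {e}) \<le> r E" using r_mono[OF M] by auto
  have c: "E - {e} - (Z - {e}) = E - Z" using e by auto
  show ?thesis unfolding conn_def c using a b by arith
qed

lemma conn_add:
  assumes M: "matroid E r" and f: "f \<in> E" and Y: "Y \<subseteq> E"
  shows "conn E r (insert f Y) \<le> conn E r Y + 1"
proof -
  have a: "r (insert f Y) \<le> r Y + 1" using r_insert[OF M f Y] .
  have b: "r (E - insert f Y) \<le> r (E - Y)" by (rule r_mono[OF M]) auto
  show ?thesis unfolding conn_def using a b by arith
qed

lemma conn_single: assumes M: "matroid E r" and f: "f \<in> E" shows "conn E r {f} \<le> 1"
proof -
  have "r (E - {f}) \<le> r E" using r_mono[OF M] by auto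
  thus ?thesis unfolding conn_def using r_single[OF M f] by arith
qed

lemma single_in_T:
  assumes M: "matroid E r" and T: "is_tangle E r \<theta> T" and f: "f \<in> E" and th: "1 < \<theta>"
  shows "{f} \<in> T"
proof -
  have "conn E r {f} < \<theta>" using conn_single[OF M f] th by arith
  hence "{f} \<in> T \<or> E - {f} \<in> T" using t_ax[OF T] f by simp
  thus ?thesis using t_del[OF T f] by blast
qed


lemma exists_cover:
  assumes M: "matroid E r" and T: "is_tangle E r \<theta> T"
  shows "finite Z \<Longrightarrow> Z \<subseteq> E \<Longrightarrow> card Z < \<theta> \<Longrightarrow> \<exists>Y\<in>T. Z \<subseteq> Y \<and> conn E r Y \<le> card Z"
proof (induction Z rule: finite_induct)
  case empty
  have c: "conn E r {} = 0" unfolding conn_def using r_empty[OF M] by simp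
  have "E \<notin> T" using tangle_cover[OF T, of E E E] by blast
  have "conn E r {} < \<theta>" using c empty by simp
  hence "{} \<in> T \<or> E - {} \<in> T" using t_ax[OF T, of "{}"] by simp
  hence "{} \<in> T" using \<open>E \<notin> T\<close> by simp
  thus ?case using c by auto
next
  case (insert f Z)
  then obtain Y where Y: "Y \<in> T" "Z \<subseteq> Y" "conn E r Y \<le> card Z" by auto
  have YE: "Y \<subseteq> E" using t_sub[OF T Y(1)] .
  have fE: "f \<in> E" using insert by auto
  have cz: "card (insert f Z) = card Z + 1" using insert by simp
  have cY: "conn E r (insert f Y) \<le> card Z + 1" using conn_add[OF M fE YE] Y by arith
  have lt: "conn E r (insert f Y) < \<theta>" using cY insert cz by arith
  have "insert f Y \<in> T"
  proof (rule ccontr)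
    assume n: "insert f Y \<notin> T"
    hence c1: "E - insert f Y \<in> T" using t_ax[OF T, of "insert f Y"] lt fE YE by auto
    have "{f} \<in> T" using single_in_T[OF M T fE] insert cz by arith
    moreover have "Y \<union> (E - insert f Y) \<union> {f} = E" using YE fE by auto
    ultimately show False using tangle_cover[OF T Y(1) c1] by blast
  qed
  thus ?case using Y cY cz by auto
qed

theorem lemma2p32:
  fixes E :: "'a set" and r :: "'a set \<Rightarrow> nat" and \<theta> :: nat
    and T :: "'a set set" and X :: "'a set" and e :: 'a
  assumes "matroid E r"
    and "is_tangle E r \<theta> T"
    and "X \<subseteq> E"
    and "tangle_indep E r \<theta> T X"
    and "e \<in> X"
  shows "tangle_indep (E - {e}) r (\<theta> - 1)
           (inherited_tangle E \<theta> T (E - {e}) r) (X - {e})"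
proof -
  note M = assms(1) and Tt = assms(2)
  have finE: "finite E" using m_fin[OF M] .
  have eE: "e \<in> E" using assms by auto
  have finX: "finite X" using assms(3) finE finite_subset by auto
  define k where "k = card X"
  have k1: "k \<ge> 1" using finX assms(5) k_def by (metis One_nat_def Suc_leI card_gt_0_iff empty_iff)
  have cX': "card (X - {e}) = k - 1" using finX assms(5) k_def by simp
  have ES: "E - (E - {e}) = {e}" using eE by auto
  define T' where "T' = inherited_tangle E \<theta> T (E - {e}) r"
  have T'def: "T' = {Y - {e} | Y. Y \<in> T \<and> conn (E - {e}) r (Y - {e}) < \<theta> - 1}"
    unfolding T'_def inherited_tangle_def ES by simp
  have rk: "tangle_rank E r \<theta> T X = k" using assms(4) k_def unfolding tangle_indep_def by simp
  have finS: "\<And>P. finite {conn E r Y | Y. Y \<in> T \<and> P Y}"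
  proof -
    fix P
    have "{conn E r Y | Y. Y \<in> T \<and> P Y} \<subseteq> {..<\<theta>}" using t_conn[OF Tt] by auto
    thus "finite {conn E r Y | Y. Y \<in> T \<and> P Y}" using finite_subset by blast
  qed
  have cont_ge: "\<And>Z. Z \<in> T \<Longrightarrow> X \<subseteq> Z \<Longrightarrow> k \<le> conn E r Z"
  proof -
    fix Z assume Z: "Z \<in> T" "X \<subseteq> Z"
    hence "tangle_rank E r \<theta> T X = Min {conn E r Y | Y. Y \<in> T \<and> X \<subseteq> Y}"
      unfolding tangle_rank_def by auto
    also have "\<dots> \<le> conn E r Z" using Z finS by (intro Min_le) auto
    finally show "k \<le> conn E r Z" using rk by simp
  qed
  have kth: "k \<le> \<theta>"
  proof (cases "\<exists>Y\<in>T. X \<subseteq> Y")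
    case True
    then obtain Z where Z: "Z \<in> T" "X \<subseteq> Z" by auto
    hence "tangle_rank E r \<theta> T X = Min {conn E r Y | Y. Y \<in> T \<and> X \<subseteq> Y}"
      unfolding tangle_rank_def by auto
    also have "\<dots> \<le> conn E r Z" using Z finS by (intro Min_le) auto
    also have "\<dots> < \<theta>" using t_conn[OF Tt Z(1)] .
    finally show ?thesis using rk by simp
  next
    case False thus ?thesis using rk unfolding tangle_rank_def by simp
  qed
  have finS': "finite {conn (E - {e}) r Y | Y. Y \<in> T' \<and> X - {e} \<subseteq> Y}"
  proof -
    have "{conn (E - {e}) r Y | Y. Y \<in> T' \<and> X - {e} \<subseteq> Y} \<subseteq> {..<\<theta>-1}" unfolding T'def by auto
    thus ?thesis using finite_subset by blast
  qed
  have low: "\<And>Y'. Y' \<in> T' \<Longrightarrow> X - {e} \<subseteq> Y' \<Longrightarrow> k - 1 \<le> conn (E - {e}) r Y'"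
  proof -
    fix Y' assume Y': "Y' \<in> T'" "X - {e} \<subseteq> Y'"
    then obtain Y where Y: "Y' = Y - {e}" "Y \<in> T" "conn (E - {e}) r (Y - {e}) < \<theta> - 1"
      unfolding T'def by auto
    have YE: "Y \<subseteq> E" using t_sub[OF Tt] Y by auto
    define Z where "Z = insert e Y"
    have ZE: "Z \<subseteq> E" using YE eE Z_def by auto
    have cz: "conn E r Z \<le> conn (E - {e}) r Y' + 1"
      using conn_del_ge[OF M _ ZE, of e] Y(1) Z_def by auto
    have y3: "conn (E - {e}) r Y' < \<theta> - 1" using Y by simp
    have czl: "conn E r Z < \<theta>" using cz y3 by linarith
    have "Z \<in> T"
    proof (cases "e \<in> Y")
      case True thus ?thesis using Y Z_def by (simp add: insert_absorb)
    next
      case False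
      show ?thesis
      proof (rule ccontr)
        assume "Z \<notin> T"
        hence c1: "E - Z \<in> T" using t_ax[OF Tt ZE czl] by auto
        have "1 < \<theta>" using y3 by linarith
        hence "{e} \<in> T" using single_in_T[OF M Tt eE] by simp
        moreover have "Y \<union> (E - Z) \<union> {e} = E" using Z_def YE eE by auto
        ultimately show False using tangle_cover[OF Tt Y(2) c1] by blast
      qed
    qed
    moreover have "X \<subseteq> Z" using Y' Y Z_def by auto
    ultimately have "k \<le> conn E r Z" using cont_ge by blast
    thus "k - 1 \<le> conn (E - {e}) r Y'" using cz by arith
  qed
  have lowr: "k - 1 \<le> tangle_rank (E - {e}) r (\<theta> - 1) T' (X - {e})"
  proof (cases "\<exists>Y\<in>T'. X - {e} \<subseteq> Y")
    case True
    hence "tangle_rank (E - {e}) r (\<theta> - 1) T' (X - {e}) = Min {conn (E - {e}) r Y | Y. Y \<in> T' \<and> X - {e} \<subseteq> Y}"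
      unfolding tangle_rank_def by auto
    moreover have "k - 1 \<le> Min {conn (E - {e}) r Y | Y. Y \<in> T' \<and> X - {e} \<subseteq> Y}"
      using True finS' low by (subst Min_ge_iff) auto
    ultimately show ?thesis by simp
  next
    case False thus ?thesis using kth unfolding tangle_rank_def by simp
  qed
  have upr: "tangle_rank (E - {e}) r (\<theta> - 1) T' (X - {e}) \<le> k - 1"
  proof (cases "k = \<theta>")
    case True
    show ?thesis
    proof (cases "\<exists>Y\<in>T'. X - {e} \<subseteq> Y")
      case True2: True
      then obtain Z where Z: "Z \<in> T'" "X - {e} \<subseteq> Z" by auto
      hence "tangle_rank (E - {e}) r (\<theta> - 1) T' (X - {e}) = Min {conn (E - {e}) r Y | Y. Y \<in> T' \<and> X - {e} \<subseteq> Y}"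
        unfolding tangle_rank_def by auto
      also have "\<dots> \<le> conn (E - {e}) r Z" using Z finS' by (intro Min_le) auto
      also have "\<dots> < \<theta> - 1" using Z unfolding T'def by auto
      finally show ?thesis using True by simp
    next
      case False thus ?thesis using True unfolding tangle_rank_def by simp
    qed
  next
    case False
    hence klt: "k < \<theta>" using kth by simp
    have "X - {e} \<subseteq> E" using assms by auto
    then obtain Y where Y: "Y \<in> T" "X - {e} \<subseteq> Y" "conn E r Y \<le> k - 1"
      using exists_cover[OF M Tt, of "X - {e}"] finX cX' klt by (metis diff_le_self finite_Diff le_less_trans)
    have YE: "Y \<subseteq> E" using t_sub[OF Tt] Y by auto
    have eY: "e \<notin> Y"
    proof
      assume "e \<in> Y"
      hence "X \<subseteq> Y" using Y by auto
      hence "k \<le> conn E r Y" using cont_ge Y by blast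
      thus False using Y k1 by arith
    qed
    have "Y \<subseteq> E - {e}" using YE eY by auto
    hence c': "conn (E - {e}) r Y \<le> k - 1" using conn_del_le[OF M eE, of Y] Y(3) by linarith
    have YT': "Y \<in> T'" unfolding T'def using Y c' klt eY k1
      by (smt (verit) Diff_empty Diff_insert0 le_less_trans diff_less_mono mem_Collect_eq)
    hence "tangle_rank (E - {e}) r (\<theta> - 1) T' (X - {e}) = Min {conn (E - {e}) r Y | Y. Y \<in> T' \<and> X - {e} \<subseteq> Y}"
      using Y unfolding tangle_rank_def by auto
    also have "\<dots> \<le> conn (E - {e}) r Y" using YT' Y finS' by (intro Min_le) auto
    finally show ?thesis using c' by simp
  qed
  show ?thesis unfolding tangle_indep_def T'_def[symmetric] using lowr upr cX' assms(3) by auto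
qed

end
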